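(* For every integer $n\ge 4$, the oriented path $Q_{n+1}$ is not homomorphic to $AC_n$.
   Context: For digraphs $G,H$, a homomorphism $G\to H$ is a map $\varphi:V_G\to V_H$ such that $(u,v)\in A_G$ implies $(\varphi(u),\varphi(v))\in A_H$. An oriented path $(p_0,\dots,p_k)$ consists of distinct vertices where for each $i$ exactly one of the arcs $p_ip_{i+1}$ (forward) or $p_{i+1}p_i$ (backward) is present, and no other arcs. For $n\ge 3$, $Q_n$ is the oriented path $(q_0,\dots,q_{n-1})$ on $n$ vertices such that: the first two arcs $q_0q_1$ and $q_1q_2$ are forward arcs; the subpath $(q_1,\dots,q_{n-2})$ is alternating (every two consecutive arcs have opposite directions); and the last two arcs (between $q_{n-3},q_{n-2}$ and between $q_{n-2},q_{n-1}$) have the same direction. For $n\ge 3$, $AC_n$ is the oriented cycle with vertices $a_0,\dots,a_{n-1}$ obtained from the alternating path $A_{n+1}=(a_0,\dots,a_n)$ — in which the arc between $a_i$ and $a_{i+1}$ is $a_i\to a_{i+1}$ if $i$ is even and $a_{i+1}\to a_i$ if $i$ is odd — by identifying $a_n$ with $a_0$. *)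

theory Defs
  imports Main
begin

type_synonym 'a digraph = "'a set \<times> ('a \<times> 'a) set"

definition verts :: "'a digraph \<Rightarrow> 'a set" where "verts G = fst G"
definition arcs :: "'a digraph \<Rightarrow> ('a \<times> 'a) set" where "arcs G = snd G"

definition is_hom :: "'a digraph \<Rightarrow> 'b digraph \<Rightarrow> ('a \<Rightarrow> 'b) \<Rightarrow> bool" where
  "is_hom G H \<phi> \<longleftrightarrow> (\<forall>v\<in>verts G. \<phi> v \<in> verts H) \<and>
     (\<forall>u v. (u, v) \<in> arcs G \<longrightarrow> (\<phi> u, \<phi> v) \<in> arcs H)"

definition homomorphic :: "'a digraph \<Rightarrow> 'b digraph \<Rightarrow> bool" where
  "homomorphic G H \<longleftrightarrow> (\<exists>\<phi>. is_hom G H \<phi>)"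

text \<open>Direction of the i-th arc (between q_i and q_(i+1)) of Q_n; True = forward.
  Arc 0 forward; arcs 1..n-3 alternate starting forward (arc 1 forward as arc q1q2);
  arc n-2 has the same direction as arc n-3.\<close>
definition Q_fwd :: "nat \<Rightarrow> nat \<Rightarrow> bool" where
  "Q_fwd n i \<longleftrightarrow> i = 0 \<or> (1 \<le> i \<and> i \<le> n - 3 \<and> odd i)
      \<or> (i = n - 2 \<and> (n - 3 = 0 \<or> odd (n - 3)))"

text \<open>Q_n on vertices 0..n-1 (vertex i = q_i), for n >= 3.\<close>
definition Q :: "nat \<Rightarrow> nat digraph" where
  "Q n = ({0..<n},
          {(i, i + 1) | i. i + 1 < n \<and> Q_fwd n i} \<union> {(i + 1, i) | i. i + 1 < n \<and> \<not> Q_fwd n i})"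

text \<open>AC_n on vertices 0..n-1 (vertex i = a_i, a_n identified with a_0).\<close>
definition AC :: "nat \<Rightarrow> nat digraph" where
  "AC n = ({0..<n},
           {(i, (i + 1) mod n) | i. i < n \<and> even i} \<union> {((i + 1) mod n, i) | i. i < n \<and> odd i})"

end

theory Submission
  imports Defs
begin

definition adjz :: "nat \<Rightarrow> nat \<Rightarrow> nat \<Rightarrow> bool" where
  "adjz n a b \<longleftrightarrow> int b mod int n = (int a + 1) mod int n \<or> int b mod int n = (int a - 1) mod int n"

lemma arc_adj:
  assumes "(a, b) \<in> arcs (AC n)" shows "adjz n a b \<and> adjz n b a"
proof -
  have k1: "\<And>x y. y = (x + 1) mod n \<Longrightarrow> adjz n x y \<and> adjz n y x"
  proof -
    fix x y assume y: "y = (x + 1) mod n"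
    hence "int y = (int x + 1) mod int n" by (simp add: zmod_int add.commute)
    hence e: "int y mod int n = (int x + 1) mod int n" by simp
    hence "int x mod int n = (int y - 1) mod int n"
      by (metis add_diff_cancel_right' mod_diff_left_eq)
    with e show "adjz n x y \<and> adjz n y x" unfolding adjz_def by simp
  qed
  from assms show ?thesis unfolding AC_def arcs_def using k1 by auto
qed

lemma walk:
  assumes "\<And>j. j < k \<Longrightarrow> adjz n (f (s + j)) (f (s + j + 1))"
  shows "\<exists>L::int. \<bar>L\<bar> \<le> int k \<and> even (L + int k) \<and> int (f (s + k)) mod int n = (int (f s) + L) mod int n"
  using assms
proof (induction k)
  case 0 then show ?case by (rule_tac x=0 in exI) simp
next
  case (Suc k)
  then obtain L where L: "\<bar>L\<bar> \<le> int k" "even (L + int k)" "int (f (s + k)) mod int n = (int (f s) + L) mod int n"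
    by auto
  have "adjz n (f (s + k)) (f (s + k + 1))" using Suc.prems by simp
  then consider "int (f (s + Suc k)) mod int n = (int (f (s + k)) + 1) mod int n"
    | "int (f (s + Suc k)) mod int n = (int (f (s + k)) - 1) mod int n"
    unfolding adjz_def by auto
  then show ?case
  proof cases
    case 1
    have "int (f (s + Suc k)) mod int n = (int (f s) + (L+1)) mod int n"
      using 1 L(3) by (metis add.assoc mod_add_left_eq)
    then show ?thesis using L by (rule_tac x="L+1" in exI) auto
  next
    case 2
    have "int (f (s + Suc k)) mod int n = (int (f s) + (L-1)) mod int n"
      using 2 L(3) by (metis add_diff_eq mod_diff_left_eq)
    then show ?thesis using L by (rule_tac x="L-1" in exI) auto
  qed
qed

lemma even_no_mid:
  assumes "even n" "(a, b) \<in> arcs (AC n)" "(b, c) \<in> arcs (AC n)" "n \<ge> 2"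
  shows False
proof -
  have "odd b"
  proof -
    from assms(2) consider (x) "even a" "a < n" "b = (a+1) mod n" | (y) "odd b" "b < n"
      unfolding AC_def arcs_def by auto
    then show ?thesis
    proof cases
      case x
      with assms(1) have "a + 1 < n" by (metis Suc_eq_plus1 Suc_lessI even_Suc)
      with x show ?thesis by simp
    qed
  qed
  moreover have "even b"
  proof -
    from assms(3) consider (x) "even b" | (y) "odd c" "c < n" "b = (c+1) mod n"
      unfolding AC_def arcs_def by auto
    then show ?thesis
    proof cases
      case y
      show ?thesis
      proof (cases "c + 1 = n")
        case True then show ?thesis using y by simp
      next
        case False then show ?thesis using y by simp
      qed
    qed
  qed
  ultimately show False by simp
qed

lemma odd_mid:
  assumes "odd n" "(a, b) \<in> arcs (AC n)" "(b, c) \<in> arcs (AC n)" "n \<ge> 2"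
  shows "b = 0"
proof (rule ccontr)
  assume nz: "b \<noteq> 0"
  have "odd b"
  proof -
    from assms(2) consider (x) "even a" "a < n" "b = (a+1) mod n" | (y) "odd b" "b < n"
      unfolding AC_def arcs_def by auto
    then show ?thesis
    proof cases
      case x
      show ?thesis
      proof (cases "a + 1 = n")
        case True then show ?thesis using x nz by simp
      next
        case False then show ?thesis using x by simp
      qed
    qed
  qed
  moreover have "even b"
  proof -
    from assms(3) consider (x) "even b" | (y) "odd c" "c < n" "b = (c+1) mod n"
      unfolding AC_def arcs_def by auto
    then show ?thesis
    proof cases
      case y
      with assms(1) have "c + 1 < n" by (metis Suc_eq_plus1 Suc_lessI even_Suc)
      with y show ?thesis by simp
    qed
  qed
  ultimately show False by simp
qed

theorem mainTheorem5:
  fixes n :: nat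
  assumes "n \<ge> 4"
  shows "\<not> homomorphic (Q (n + 1)) (AC n)"
proof
  assume "homomorphic (Q (n + 1)) (AC n)"
  then obtain f where f: "\<And>u v. (u, v) \<in> arcs (Q (n+1)) \<Longrightarrow> (f u, f v) \<in> arcs (AC n)"
    unfolding homomorphic_def is_hom_def by blast
  have fw: "\<And>i. i + 1 < n + 1 \<Longrightarrow> Q_fwd (n+1) i \<Longrightarrow> (f i, f (i+1)) \<in> arcs (AC n)"
    by (rule f) (auto simp: Q_def arcs_def)
  have bw: "\<And>i. i + 1 < n + 1 \<Longrightarrow> \<not> Q_fwd (n+1) i \<Longrightarrow> (f (i+1), f i) \<in> arcs (AC n)"
    by (rule f) (auto simp: Q_def arcs_def)
  have adj: "\<And>i. i < n \<Longrightarrow> adjz n (f i) (f (i+1))"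
    using fw bw arc_adj by (metis add_less_cancel_right)
  have a0: "(f 0, f 1) \<in> arcs (AC n)" using fw[of 0] assms by (simp add: Q_fwd_def)
  have a1: "(f 1, f 2) \<in> arcs (AC n)" using fw[of 1] assms by (simp add: Q_fwd_def numeral_2_eq_2, linarith)
  show False
  proof (cases "even n")
    case True
    then show False using even_no_mid a0 a1 assms by fastforce
  next
    case odd: False
    have f1: "f 1 = 0" using odd_mid[OF odd a0 a1] assms by simp
    have b1: "(f (n-2), f (n-1)) \<in> arcs (AC n)"
    proof -
      have "odd (n - 2)" using odd assms by presburger
      moreover have "n - 2 + 1 = n - 1" using assms by simp
      ultimately show ?thesis using fw[of "n-2"] assms by (simp add: Q_fwd_def)
    qed
    have b2: "(f (n-1), f n) \<in> arcs (AC n)"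
      using fw[of "n-1"] assms odd by (simp add: Q_fwd_def)
    have fn1: "f (n-1) = 0" using odd_mid[OF odd b1 b2] assms by simp
    obtain L :: int where L: "\<bar>L\<bar> \<le> int (n-2)" "even (L + int (n-2))"
      "int (f (1 + (n-2))) mod int n = (int (f 1) + L) mod int n"
      using walk[of "n-2" n f 1] adj assms by fastforce
    have "1 + (n-2) = n - 1" using assms by simp
    with L(3) f1 fn1 have "L mod int n = 0" by simp
    moreover have "\<bar>L\<bar> < int n" using L(1) assms by simp
    ultimately have "L = 0"
      by (metis dvd_imp_le_int mod_eq_0_iff_dvd abs_of_nat not_le)
    with L(2) odd assms show False by (simp add: even_of_nat_iff[symmetric] of_nat_diff)
  qed
qed

end
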